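(* Let $L$ be a $2$-locally-differing $k$-dimensional $l$-assignment on a simplicial complex $X$, and let $\sigma_1,\sigma_2\in X(k)$ with $|\sigma_1\cap\sigma_2|=|\sigma_1|-1$. Then there is at most one permutation $\pi$ of $[l]$ such that $L^{\sigma_1}_i(v)=L^{\sigma_2}_{\pi(i)}(v)$ for every $v\in\sigma_1\cap\sigma_2$ and every $i\in[l]$.
   Context: $X(k)$ = faces with $k+1$ elements. A $k$-dimensional $l$-assignment is $L=(L^\sigma_i)_{\sigma\in X(k),i\in[l]}$ with $L^\sigma_i:\sigma\to\{0,1\}$. It is $2$-locally-differing if for every $\sigma\in X(k)$ and $i\ne j$ there exist two distinct vertices $x_1\ne x_2$ of $\sigma$ with $L^\sigma_i(x_t)\neq L^\sigma_j(x_t)$ for $t=1,2$. *)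

theory Defs
  imports "HOL-Combinatorics.Permutations"
begin

definition simplicial_complex :: "'v set set \<Rightarrow> bool" where
  "simplicial_complex X \<longleftrightarrow>
     (\<forall>\<sigma>\<in>X. finite \<sigma> \<and> \<sigma> \<noteq> {} \<and> (\<forall>\<tau>. \<tau> \<subseteq> \<sigma> \<longrightarrow> \<tau> \<noteq> {} \<longrightarrow> \<tau> \<in> X))"

definition faces :: "'v set set \<Rightarrow> nat \<Rightarrow> 'v set set" where
  "faces X k = {\<sigma> \<in> X. card \<sigma> = k + 1}"

text \<open>A k-dimensional l-assignment is L :: face => index => vertex => bool;
L \<sigma> i is L^\<sigma>_i (only its values on \<sigma>, for \<sigma> in X(k) and i in [l] = {1..l}, matter).\<close>
definition two_locally_differing ::
  "'v set set \<Rightarrow> nat \<Rightarrow> nat \<Rightarrow> ('v set \<Rightarrow> nat \<Rightarrow> 'v \<Rightarrow> bool) \<Rightarrow> bool" where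
  "two_locally_differing X k l L \<longleftrightarrow>
     (\<forall>\<sigma>\<in>faces X k. \<forall>i\<in>{1..l}. \<forall>j\<in>{1..l}. i \<noteq> j \<longrightarrow>
        (\<exists>x1 x2. x1 \<in> \<sigma> \<and> x2 \<in> \<sigma> \<and> x1 \<noteq> x2 \<and>
                 L \<sigma> i x1 \<noteq> L \<sigma> j x1 \<and> L \<sigma> i x2 \<noteq> L \<sigma> j x2))"

end

theory Submission
  imports Defs
begin

theorem mainTheorem7:
  fixes X :: "'v set set" and k l :: nat and L :: "'v set \<Rightarrow> nat \<Rightarrow> 'v \<Rightarrow> bool"
    and \<sigma>1 \<sigma>2 :: "'v set"
  assumes "simplicial_complex X"
    and "two_locally_differing X k l L"
    and "\<sigma>1 \<in> faces X k" and "\<sigma>2 \<in> faces X k"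
    and "card (\<sigma>1 \<inter> \<sigma>2) = card \<sigma>1 - 1"
  shows "\<forall>\<pi> \<pi>'.
           (\<pi> permutes {1..l} \<and> (\<forall>v\<in>\<sigma>1 \<inter> \<sigma>2. \<forall>i\<in>{1..l}. L \<sigma>1 i v = L \<sigma>2 (\<pi> i) v)) \<and>
           (\<pi>' permutes {1..l} \<and> (\<forall>v\<in>\<sigma>1 \<inter> \<sigma>2. \<forall>i\<in>{1..l}. L \<sigma>1 i v = L \<sigma>2 (\<pi>' i) v))
           \<longrightarrow> \<pi> = \<pi>'"
proof (intro allI impI)
  fix \<pi> \<pi>'
  assume H: "(\<pi> permutes {1..l} \<and> (\<forall>v\<in>\<sigma>1 \<inter> \<sigma>2. \<forall>i\<in>{1..l}. L \<sigma>1 i v = L \<sigma>2 (\<pi> i) v)) \<and>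
           (\<pi>' permutes {1..l} \<and> (\<forall>v\<in>\<sigma>1 \<inter> \<sigma>2. \<forall>i\<in>{1..l}. L \<sigma>1 i v = L \<sigma>2 (\<pi>' i) v))"
  have c1: "card \<sigma>1 = k + 1" and c2: "card \<sigma>2 = k + 1" and s2: "\<sigma>2 \<in> X"
    using assms(3,4) by (auto simp: faces_def)
  have f2: "finite \<sigma>2" using assms(1) s2 by (auto simp: simplicial_complex_def)
  have cd: "card (\<sigma>2 - \<sigma>1) = 1"
  proof -
    have "card (\<sigma>2 - \<sigma>1) = card \<sigma>2 - card (\<sigma>2 \<inter> \<sigma>1)"
      using f2 by (metis card_Diff_subset_Int finite_Int)
    also have "\<dots> = 1" using c1 c2 assms(5) by (simp add: Int_commute)
    finally show ?thesis .
  qed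
  show "\<pi> = \<pi>'"
  proof
    fix i
    show "\<pi> i = \<pi>' i"
    proof (cases "i \<in> {1..l}")
      case False
      then show ?thesis using H by (metis permutes_not_in)
    next
      case True
      show ?thesis
      proof (rule ccontr)
        assume ne: "\<pi> i \<noteq> \<pi>' i"
        have in1: "\<pi> i \<in> {1..l}" "\<pi>' i \<in> {1..l}" using H True
          by (meson permutes_in_image)+
        then obtain x1 x2 where x: "x1 \<in> \<sigma>2" "x2 \<in> \<sigma>2" "x1 \<noteq> x2"
          "L \<sigma>2 (\<pi> i) x1 \<noteq> L \<sigma>2 (\<pi>' i) x1" "L \<sigma>2 (\<pi> i) x2 \<noteq> L \<sigma>2 (\<pi>' i) x2"
          using assms(2,4) ne unfolding two_locally_differing_def by blast
        have "x1 \<in> \<sigma>2 - \<sigma>1" "x2 \<in> \<sigma>2 - \<sigma>1" using x H True by auto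
        then have "{x1, x2} \<subseteq> \<sigma>2 - \<sigma>1" by auto
        then have "card {x1, x2} \<le> card (\<sigma>2 - \<sigma>1)" using f2 by (intro card_mono) auto
        then show False using cd x(3) by simp
      qed
    qed
  qed
qed

end
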